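(* Let $\phi_\alpha$ be either $\|\cdot\|_1$ or $(p-1)^{1/p}\|\cdot\|_p$ with $p\ge2$, and let $\theta^*$ be a KKT point of $\min_\theta\frac12\phi_\alpha^2(\theta)$ s.t. $y_if(\theta,x_i)\ge1$ for all $i\in[K]$. Then there exist $h_i\in\partial^\circ_\theta f(\theta^*,x_i)$, $i\in[K]$, such that $\frac1L\theta^*$ is an optimal solution of $$\min_{\theta\in\mathbb R^n}\tfrac12\phi_\alpha^2(\theta)\quad\text{s.t.}\quad y_i\langle\theta,h_i\rangle_2\ge1\ \ \forall i\in[K].$$
   Context: $f(\theta,x)$ is locally Lipschitz in $\theta$ and $L$-homogeneous ($f(c\theta,x)=c^Lf(\theta,x)$, $c>0$), so Euler's identity $\langle\theta,h\rangle=Lf(\theta,x)$ holds for all $h\in\partial^\circ_\theta f(\theta,x)$. $q_i(\theta)=y_if(\theta,x_i)$. KKT point: feasible $\theta$ with $\lambda_i\ge0$ and $h_i'\in\partial^\circ q_i(\theta)$ such that $0\in\partial^\circ\frac12\phi_\alpha^2(\theta)-\sum_i\lambda_ih_i'$ and $\lambda_i(q_i(\theta)-1)=0$ for all $i$. *)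

theory Defs
  imports "HOL-Analysis.Analysis"
begin

definition clarke_subdiff :: "(real ^ 'n \<Rightarrow> real) \<Rightarrow> real ^ 'n \<Rightarrow> (real ^ 'n) set" where
  "clarke_subdiff g \<theta> = convex hull
     {v. \<exists>s G. s \<longlonglongrightarrow> \<theta> \<and>
              (\<forall>k. (g has_derivative (\<lambda>d. G k \<bullet> d)) (at (s k))) \<and>
              G \<longlonglongrightarrow> v}"

definition locally_lipschitz :: "(real ^ 'n \<Rightarrow> real) \<Rightarrow> bool" where
  "locally_lipschitz g \<longleftrightarrow>
     (\<forall>z. \<exists>r>0. \<exists>C. \<forall>u\<in>ball z r. \<forall>w\<in>ball z r. \<bar>g u - g w\<bar> \<le> C * dist u w)"

definition l1norm :: "real ^ 'n \<Rightarrow> real" where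
  "l1norm \<theta> = (\<Sum>j\<in>UNIV. \<bar>\<theta> $ j\<bar>)"

definition lpnorm :: "real \<Rightarrow> real ^ 'n \<Rightarrow> real" where
  "lpnorm p \<theta> = (\<Sum>j\<in>UNIV. \<bar>\<theta> $ j\<bar> powr p) powr (1 / p)"

definition kkt_point ::
  "(real ^ 'n \<Rightarrow> real) \<Rightarrow> (real ^ 'n \<Rightarrow> 'x \<Rightarrow> real) \<Rightarrow> nat \<Rightarrow> (nat \<Rightarrow> 'x) \<Rightarrow> (nat \<Rightarrow> real)
     \<Rightarrow> real ^ 'n \<Rightarrow> bool" where
  "kkt_point \<phi> f K x y \<theta> \<longleftrightarrow>
     (\<forall>i<K. y i * f \<theta> (x i) \<ge> 1) \<and>
     (\<exists>lam h'. (\<forall>i<K. lam i \<ge> 0) \<and>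
        (\<forall>i<K. h' i \<in> clarke_subdiff (\<lambda>t. y i * f t (x i)) \<theta>) \<and>
        0 \<in> (\<lambda>g. g - (\<Sum>i<K. lam i *\<^sub>R h' i)) ` clarke_subdiff (\<lambda>t. (1/2) * (\<phi> t)\<^sup>2) \<theta> \<and>
        (\<forall>i<K. lam i * (y i * f \<theta> (x i) - 1) = 0))"

end

theory Submission
  imports Defs
begin


lemma powr_conv:
  fixes p x y t :: real
  assumes p: "p \<ge> 1" and x: "x \<ge> 0" and y: "y \<ge> 0" and t: "0 \<le> t" "t \<le> 1"
  shows "((1-t)*x + t*y) powr p \<le> (1-t) * x powr p + t * y powr p"
proof -
  have le: "a powr p \<le> a" if "0 \<le> a" "a \<le> 1" for a :: real
  proof (cases "a = 0")
    case True then show ?thesis using p by simp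
  next
    case False
    then have "a powr p \<le> a powr 1" using that p by (intro powr_mono') auto
    then show ?thesis using that by simp
  qed
  show ?thesis
  proof (cases "x = 0 \<or> y = 0")
    case True
    then show ?thesis
    proof
      assume "x = 0"
      then have "((1-t)*x + t*y) powr p = t powr p * y powr p" using t y by (simp add: powr_mult)
      also have "\<dots> \<le> t * y powr p" using le[of t] t by (intro mult_right_mono) auto
      finally show ?thesis using \<open>x = 0\<close> p by simp
    next
      assume "y = 0"
      then have "((1-t)*x + t*y) powr p = (1-t) powr p * x powr p" using t x by (simp add: powr_mult)
      also have "\<dots> \<le> (1-t) * x powr p" using le[of "1-t"] t by (intro mult_right_mono) auto
      finally show ?thesis using \<open>y = 0\<close> p by simp
    qed
  next
    case False
    then have "x > 0" "y > 0" using x y by auto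
    then show ?thesis using convex_onD[OF powr_convex[OF p], of t x y] t by simp
  qed
qed

definition Sp :: "real \<Rightarrow> real ^ 'n \<Rightarrow> real" where
  "Sp p \<theta> = (\<Sum>j\<in>UNIV. \<bar>\<theta> $ j\<bar> powr p)"

lemma Sp_nonneg: "Sp p \<theta> \<ge> 0" unfolding Sp_def by (intro sum_nonneg) auto

lemma Sp_convex:
  assumes p: "p \<ge> 1" shows "convex_on UNIV (Sp p)"
proof (rule convex_onI)
  fix t :: real and a b :: "real ^ 'n"
  assume t: "0 < t" "t < 1"
  have "Sp p ((1 - t) *\<^sub>R a + t *\<^sub>R b) = (\<Sum>j\<in>UNIV. \<bar>(1-t) * a$j + t * b$j\<bar> powr p)"
    unfolding Sp_def by simp
  also have "\<dots> \<le> (\<Sum>j\<in>UNIV. ((1-t) * \<bar>a$j\<bar> + t * \<bar>b$j\<bar>) powr p)"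
  proof (intro sum_mono powr_mono2)
    fix j show "\<bar>(1-t) * a$j + t * b$j\<bar> \<le> (1-t) * \<bar>a$j\<bar> + t * \<bar>b$j\<bar>"
    proof -
      have "\<bar>(1-t) * a$j + t * b$j\<bar> \<le> \<bar>(1-t) * a$j\<bar> + \<bar>t * b$j\<bar>" by (rule abs_triangle_ineq)
      also have "\<dots> = (1-t) * \<bar>a$j\<bar> + t * \<bar>b$j\<bar>" using t by (simp add: abs_mult)
      finally show ?thesis .
    qed
  qed (use p in auto)
  also have "\<dots> \<le> (\<Sum>j\<in>UNIV. (1-t) * \<bar>a$j\<bar> powr p + t * \<bar>b$j\<bar> powr p)"
    by (intro sum_mono powr_conv) (use p t in auto)
  also have "\<dots> = (1 - t) * Sp p a + t * Sp p b"
    unfolding Sp_def by (simp add: sum.distrib sum_distrib_left)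
  finally show "Sp p ((1 - t) *\<^sub>R a + t *\<^sub>R b) \<le> (1 - t) * Sp p a + t * Sp p b" .
qed simp

lemma Sp_hom:
  assumes c: "c \<ge> 0" shows "Sp p (c *\<^sub>R \<theta>) = c powr p * Sp p \<theta>"
  unfolding Sp_def using c by (simp add: abs_mult powr_mult sum_distrib_left)

lemma Sp_zero:
  assumes "p > 0" "Sp p \<theta> = 0" shows "\<theta> = 0"
proof -
  have "\<forall>j\<in>UNIV. \<bar>\<theta> $ j\<bar> powr p = 0"
    using assms unfolding Sp_def by (subst sum_nonneg_eq_0_iff[symmetric]) auto
  then show ?thesis by (simp add: vec_eq_iff)
qed

lemma lpnorm_Sp: "lpnorm p \<theta> = Sp p \<theta> powr (1/p)"
  unfolding lpnorm_def Sp_def by simp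

lemma lpnorm_hom:
  assumes c: "c \<ge> 0" and p: "p > 0" shows "lpnorm p (c *\<^sub>R \<theta>) = c * lpnorm p \<theta>"
proof -
  have "lpnorm p (c *\<^sub>R \<theta>) = (c powr p) powr (1/p) * Sp p \<theta> powr (1/p)"
    unfolding lpnorm_Sp using c Sp_nonneg by (simp add: Sp_hom powr_mult)
  also have "(c powr p) powr (1/p) = c" using c p by (simp add: powr_powr)
  finally show ?thesis by (simp add: lpnorm_Sp)
qed

lemma lpnorm_nonneg: "lpnorm p \<theta> \<ge> 0" by (simp add: lpnorm_Sp)

lemma lpnorm_triangle:
  assumes p: "p \<ge> 1" shows "lpnorm p (a + b) \<le> lpnorm p a + lpnorm p b"
proof (cases "lpnorm p a = 0 \<or> lpnorm p b = 0")
  case True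
  have z: "\<theta> = 0" if "lpnorm p \<theta> = 0" for \<theta> :: "real ^ 'n"
    using that p by (intro Sp_zero[of p]) (auto simp: lpnorm_Sp)
  from True show ?thesis
  proof
    assume "lpnorm p a = 0" then have "a = 0" by (rule z) then show ?thesis by (simp add: lpnorm_nonneg)
  next
    assume "lpnorm p b = 0" then have "b = 0" by (rule z) then show ?thesis by (simp add: lpnorm_nonneg)
  qed
next
  case False
  define A where "A = lpnorm p a"
  define B where "B = lpnorm p b"
  have A: "A > 0" and B: "B > 0" using False lpnorm_nonneg[of p] unfolding A_def B_def
    by (metis less_eq_real_def)+
  have SA: "Sp p ((1/A) *\<^sub>R a) = 1"
  proof -
    have "lpnorm p ((1/A) *\<^sub>R a) = 1" using A p by (simp add: lpnorm_hom A_def)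
    then have "(Sp p ((1/A) *\<^sub>R a) powr (1/p)) powr p = 1" by (simp add: lpnorm_Sp)
    then show ?thesis using p Sp_nonneg[of p "(1/A) *\<^sub>R a"] by (simp add: powr_powr)
  qed
  have SB: "Sp p ((1/B) *\<^sub>R b) = 1"
  proof -
    have "lpnorm p ((1/B) *\<^sub>R b) = 1" using B p by (simp add: lpnorm_hom B_def)
    then have "(Sp p ((1/B) *\<^sub>R b) powr (1/p)) powr p = 1" by (simp add: lpnorm_Sp)
    then show ?thesis using p Sp_nonneg[of p "(1/B) *\<^sub>R b"] by (simp add: powr_powr)
  qed
  define t where "t = B / (A + B)"
  have t: "0 \<le> t" "t \<le> 1" using A B by (auto simp: t_def)
  have eq: "(1 - t) *\<^sub>R ((1/A) *\<^sub>R a) + t *\<^sub>R ((1/B) *\<^sub>R b) = (1/(A+B)) *\<^sub>R (a + b)"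
    using A B by (simp add: t_def field_simps scaleR_add_right)
  have "Sp p ((1/(A+B)) *\<^sub>R (a + b)) \<le> 1"
    using convex_onD[OF Sp_convex[OF p], of t "(1/A) *\<^sub>R a" "(1/B) *\<^sub>R b"] t SA SB eq by simp
  then have "lpnorm p ((1/(A+B)) *\<^sub>R (a + b)) \<le> 1"
    unfolding lpnorm_Sp using p Sp_nonneg[of p "(1/(A+B)) *\<^sub>R (a + b)"] by (intro powr_le1) auto
  then have "(1/(A+B)) * lpnorm p (a + b) \<le> 1" using A B p by (simp add: lpnorm_hom)
  then show ?thesis using A B by (simp add: A_def B_def field_simps)
qed


lemma lip_cont:
  assumes "locally_lipschitz g" shows "isCont g z"
proof -
  obtain r C where r: "r > 0" and C: "\<forall>u\<in>ball z r. \<forall>w\<in>ball z r. \<bar>g u - g w\<bar> \<le> C * dist u w"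
    using assms unfolding locally_lipschitz_def by blast
  show ?thesis unfolding continuous_at_eps_delta
  proof (intro allI impI)
    fix e :: real assume e: "e > 0"
    define d where "d = min r (e / (\<bar>C\<bar> + 1))"
    have d: "d > 0" using r e by (simp add: d_def)
    have "dist (g u) (g z) < e" if u: "dist u z < d" for u
    proof -
      have uz: "u \<in> ball z r" "z \<in> ball z r" using u r by (auto simp: d_def dist_commute)
      have "\<bar>g u - g z\<bar> \<le> C * dist u z" using C uz by blast
      also have "\<dots> \<le> \<bar>C\<bar> * dist u z" by (simp add: mult_right_mono)
      also have "\<dots> \<le> \<bar>C\<bar> * (e / (\<bar>C\<bar> + 1))"
        using u by (intro mult_left_mono) (auto simp: d_def)
      also have "\<dots> < e" using e by (simp add: field_simps)
      finally show ?thesis by (simp add: dist_real_def)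
    qed
    then show "\<exists>d>0. \<forall>x'. dist x' z < d \<longrightarrow> dist (g x') (g z) < e" using d by blast
  qed
qed

lemma subgrad_diff:
  fixes F :: "real ^ 'n \<Rightarrow> real"
  assumes cvx: "convex_on UNIV F" and der: "(F has_derivative (\<lambda>d. G \<bullet> d)) (at s)"
  shows "F s + G \<bullet> (z - s) \<le> F z"
proof -
  define d where "d = z - s"
  define h where "h t = F (s + t *\<^sub>R d)" for t :: real
  have hc: "convex_on UNIV h"
  proof (rule convex_onI)
    fix t a b :: real assume t: "0 < t" "t < 1"
    have "s + ((1 - t) * a + t * b) *\<^sub>R d = (1 - t) *\<^sub>R (s + a *\<^sub>R d) + t *\<^sub>R (s + b *\<^sub>R d)"
      by (simp add: algebra_simps)
    then have "h ((1 - t) *\<^sub>R a + t *\<^sub>R b) = F ((1 - t) *\<^sub>R (s + a *\<^sub>R d) + t *\<^sub>R (s + b *\<^sub>R d))"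
      by (simp add: h_def)
    also have "\<dots> \<le> (1 - t) * F (s + a *\<^sub>R d) + t * F (s + b *\<^sub>R d)"
      using convex_onD[OF cvx] t by simp
    finally show "h ((1 - t) *\<^sub>R a + t *\<^sub>R b) \<le> (1 - t) * h a + t * h b" by (simp add: h_def)
  qed simp
  have d1: "((\<lambda>t::real. s + t *\<^sub>R d) has_derivative (\<lambda>t. t *\<^sub>R d)) (at 0)"
    by (auto intro!: derivative_eq_intros)
  have der0: "(F has_derivative (\<lambda>d. G \<bullet> d)) (at (s + 0 *\<^sub>R d))" using der by simp
  have hd: "(h has_derivative (\<lambda>t. G \<bullet> (t *\<^sub>R d))) (at 0)"
    unfolding h_def using has_derivative_compose[OF d1 der0] by simp
  have eq: "(\<lambda>t. G \<bullet> (t *\<^sub>R d)) = (*) (G \<bullet> d)" by (rule ext) (simp add: mult.commute)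
  have "(h has_field_derivative (G \<bullet> d)) (at 0)"
    using hd unfolding has_field_derivative_def eq .
  then have "h 1 - h 0 \<ge> (G \<bullet> d) * (1 - 0)"
    by (intro convex_on_imp_above_tangent[OF hc]) auto
  then show ?thesis by (simp add: h_def d_def)
qed

lemma clarke_convex:
  fixes F :: "real ^ 'n \<Rightarrow> real"
  assumes cvx: "convex_on UNIV F" and v: "v \<in> clarke_subdiff F \<theta>"
  shows "F \<theta> + v \<bullet> (z - \<theta>) \<le> F z"
proof -
  have cont: "isCont F w" for w
    using convex_on_continuous[OF open_UNIV cvx] by (simp add: continuous_on_eq_continuous_at)
  let ?S = "{v. \<forall>z. F \<theta> + v \<bullet> (z - \<theta>) \<le> F z}"
  have gen: "{v. \<exists>s G. s \<longlonglongrightarrow> \<theta> \<and> (\<forall>k. (F has_derivative (\<lambda>d. G k \<bullet> d)) (at (s k))) \<and> G \<longlonglongrightarrow> v} \<subseteq> ?S"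
  proof safe
    fix s G v z
    assume s: "s \<longlonglongrightarrow> \<theta>" and D: "\<forall>k. (F has_derivative (\<lambda>d. G k \<bullet> d)) (at (s k))"
      and G: "G \<longlonglongrightarrow> v"
    have le: "F (s k) + G k \<bullet> (z - s k) \<le> F z" for k by (rule subgrad_diff[OF cvx D[rule_format]])
    have "(\<lambda>k. F (s k) + G k \<bullet> (z - s k)) \<longlonglongrightarrow> F \<theta> + v \<bullet> (z - \<theta>)"
      by (intro tendsto_intros isCont_tendsto_compose[OF cont] s G)
    then show "F \<theta> + v \<bullet> (z - \<theta>) \<le> F z" using le by (intro LIMSEQ_le_const2) auto
  qed
  have "convex ?S"
    unfolding convex_def
  proof safe
    fix x y :: "real ^ 'n" and u w :: real and z
    assume x: "\<forall>z. F \<theta> + x \<bullet> (z - \<theta>) \<le> F z" and y: "\<forall>z. F \<theta> + y \<bullet> (z - \<theta>) \<le> F z"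
      and u: "0 \<le> u" "0 \<le> w" "u + w = 1"
    have "F \<theta> + (u *\<^sub>R x + w *\<^sub>R y) \<bullet> (z - \<theta>) = u * (F \<theta> + x \<bullet> (z - \<theta>)) + w * (F \<theta> + y \<bullet> (z - \<theta>))"
      using u by (simp add: inner_add_left algebra_simps) (metis distrib_right mult_1 )
    also have "\<dots> \<le> u * F z + w * F z" using x y u by (intro add_mono mult_left_mono) auto
    also have "\<dots> = F z" using u by (metis distrib_right mult_1)
    finally show "F \<theta> + (u *\<^sub>R x + w *\<^sub>R y) \<bullet> (z - \<theta>) \<le> F z" .
  qed
  then have "clarke_subdiff F \<theta> \<subseteq> ?S" unfolding clarke_subdiff_def by (intro hull_minimal gen)
  then show ?thesis using v by blast
qed

lemma euler:
  fixes g :: "real ^ 'n \<Rightarrow> real"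
  assumes L: "L > 0" and cont: "\<And>w. isCont g w"
    and hom: "\<And>c \<theta>. c > 0 \<Longrightarrow> g (c *\<^sub>R \<theta>) = c powr L * g \<theta>"
    and v: "v \<in> clarke_subdiff g \<theta>"
  shows "v \<bullet> \<theta> = L * g \<theta>"
proof -
  have A: "G \<bullet> s = L * g s" if der: "(g has_derivative (\<lambda>d. G \<bullet> d)) (at s)" for G s
  proof -
    have d1: "((\<lambda>c::real. c *\<^sub>R s) has_derivative (\<lambda>t. t *\<^sub>R s)) (at 1)"
      by (auto intro!: derivative_eq_intros)
    have der1: "(g has_derivative (\<lambda>d. G \<bullet> d)) (at (1 *\<^sub>R s))" using der by simp
    have hd: "((\<lambda>c. g (c *\<^sub>R s)) has_derivative (\<lambda>t. G \<bullet> (t *\<^sub>R s))) (at 1)"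
      using has_derivative_compose[OF d1 der1] by simp
    have eq: "(\<lambda>t. G \<bullet> (t *\<^sub>R s)) = (*) (G \<bullet> s)" by (rule ext) (simp add: mult.commute)
    have k1: "((\<lambda>c. g (c *\<^sub>R s)) has_field_derivative (G \<bullet> s)) (at 1)"
      using hd unfolding has_field_derivative_def eq .
    have k1': "((\<lambda>c. c powr L * g s) has_field_derivative (G \<bullet> s)) (at 1)"
      by (rule has_field_derivative_transform_within_open[OF k1, of "{0<..}"]) (auto simp: hom)
    have k2: "((\<lambda>c. c powr L * g s) has_field_derivative (L * 1 powr (L - 1) * g s)) (at 1)"
      by (intro DERIV_cmult_right has_real_derivative_powr) simp
    show ?thesis using DERIV_unique[OF k1' k2] by simp
  qed
  let ?S = "{v. v \<bullet> \<theta> = L * g \<theta>}"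
  have gen: "{v. \<exists>s G. s \<longlonglongrightarrow> \<theta> \<and> (\<forall>k. (g has_derivative (\<lambda>d. G k \<bullet> d)) (at (s k))) \<and> G \<longlonglongrightarrow> v} \<subseteq> ?S"
  proof safe
    fix s G v
    assume s: "s \<longlonglongrightarrow> \<theta>" and D: "\<forall>k. (g has_derivative (\<lambda>d. G k \<bullet> d)) (at (s k))"
      and G: "G \<longlonglongrightarrow> v"
    have eq: "G k \<bullet> s k = L * g (s k)" for k using A D by blast
    have l1: "(\<lambda>k. G k \<bullet> s k) \<longlonglongrightarrow> v \<bullet> \<theta>" by (intro tendsto_intros s G)
    have l2: "(\<lambda>k. L * g (s k)) \<longlonglongrightarrow> L * g \<theta>" by (intro tendsto_intros isCont_tendsto_compose[OF cont] s)
    show "v \<bullet> \<theta> = L * g \<theta>" using LIMSEQ_unique[OF l1] l2 eq by simp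
  qed
  have "convex {v. \<theta> \<bullet> v = L * g \<theta>}" by (rule convex_hyperplane)
  moreover have "{v. \<theta> \<bullet> v = L * g \<theta>} = ?S" by (auto simp: inner_commute)
  ultimately have "convex ?S" by simp
  then have "clarke_subdiff g \<theta> \<subseteq> ?S" unfolding clarke_subdiff_def by (intro hull_minimal gen)
  then show ?thesis using v by blast
qed

lemma clarke_scale:
  fixes g :: "real ^ 'n \<Rightarrow> real"
  assumes c: "c \<noteq> 0" and v: "v \<in> clarke_subdiff (\<lambda>t. c * g t) \<theta>"
  shows "(1 / c) *\<^sub>R v \<in> clarke_subdiff g \<theta>"
proof -
  let ?gen = "\<lambda>g. {v. \<exists>s G. s \<longlonglongrightarrow> \<theta> \<and> (\<forall>k. (g has_derivative (\<lambda>d. G k \<bullet> d)) (at (s k))) \<and> G \<longlonglongrightarrow> v}"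
  have gen: "?gen (\<lambda>t. c * g t) \<subseteq> (\<lambda>w. c *\<^sub>R w) ` ?gen g"
  proof safe
    fix s G v
    assume s: "s \<longlonglongrightarrow> \<theta>" and D: "\<forall>k. ((\<lambda>t. c * g t) has_derivative (\<lambda>d. G k \<bullet> d)) (at (s k))"
      and G: "G \<longlonglongrightarrow> v"
    have D': "(g has_derivative (\<lambda>d. ((1/c) *\<^sub>R G k) \<bullet> d)) (at (s k))" for k
    proof -
      have "((\<lambda>t. (1/c) * (c * g t)) has_derivative (\<lambda>d. (1/c) * (G k \<bullet> d))) (at (s k))"
        using D by (intro has_derivative_mult_right) auto
      then show ?thesis using c by simp
    qed
    have G': "(\<lambda>k. (1/c) *\<^sub>R G k) \<longlonglongrightarrow> (1/c) *\<^sub>R v" by (intro tendsto_intros G)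
    have "(1/c) *\<^sub>R v \<in> ?gen g"
      apply (rule CollectI, rule exI[of _ s], rule exI[of _ "\<lambda>k. (1/c) *\<^sub>R G k"])
      using s D' G' by auto
    moreover have "v = c *\<^sub>R ((1/c) *\<^sub>R v)" using c by simp
    ultimately show "v \<in> (\<lambda>w. c *\<^sub>R w) ` ?gen g" by blast
  qed
  have "clarke_subdiff (\<lambda>t. c * g t) \<theta> \<subseteq> convex hull ((\<lambda>w. c *\<^sub>R w) ` ?gen g)"
    unfolding clarke_subdiff_def by (intro hull_mono gen)
  also have "\<dots> = (\<lambda>w. c *\<^sub>R w) ` clarke_subdiff g \<theta>"
    unfolding clarke_subdiff_def by (rule convex_hull_scaling)
  finally obtain w where "w \<in> clarke_subdiff g \<theta>" "v = c *\<^sub>R w" using v by blast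
  then show ?thesis using c by simp
qed



lemma l1_lp: "l1norm = lpnorm 1"
proof
  fix \<theta> :: "real ^ 'n"
  have "(\<Sum>j\<in>UNIV. \<bar>\<theta> $ j\<bar>) \<ge> 0" by (intro sum_nonneg) auto
  then show "l1norm \<theta> = lpnorm 1 \<theta>" unfolding l1norm_def lpnorm_def by simp
qed

lemma phi_form:
  assumes phi: "\<phi> = l1norm \<or> (\<exists>p\<ge>2. \<phi> = (\<lambda>\<theta>. (p - 1) powr (1 / p) * lpnorm p \<theta>))"
  shows "\<exists>c p. c \<ge> 0 \<and> p \<ge> 1 \<and> \<phi> = (\<lambda>\<theta>. c * lpnorm p \<theta>)"
  using phi
proof
  assume "\<phi> = l1norm" then show ?thesis by (intro exI[of _ 1]) (auto simp: l1_lp)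
next
  assume "\<exists>p\<ge>2. \<phi> = (\<lambda>\<theta>. (p - 1) powr (1 / p) * lpnorm p \<theta>)"
  then obtain p where "p \<ge> 2" "\<phi> = (\<lambda>\<theta>. (p - 1) powr (1 / p) * lpnorm p \<theta>)" by blast
  then show ?thesis by (intro exI[of _ "(p - 1) powr (1 / p)"] exI[of _ p]) auto
qed

lemma F_conv:
  assumes c: "c \<ge> 0" and p: "p \<ge> 1"
  shows "convex_on UNIV (\<lambda>t. (1/2) * (c * lpnorm p t)\<^sup>2)"
proof (rule convex_onI)
  fix t :: real and a b :: "real ^ 'n"
  assume t: "0 < t" "t < 1"
  define A where "A = c * lpnorm p a"
  define B where "B = c * lpnorm p b"
  have A: "A \<ge> 0" and B: "B \<ge> 0" by (auto simp: A_def B_def intro!: mult_nonneg_nonneg c lpnorm_nonneg)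
  have "lpnorm p ((1 - t) *\<^sub>R a + t *\<^sub>R b) \<le> lpnorm p ((1 - t) *\<^sub>R a) + lpnorm p (t *\<^sub>R b)"
    by (rule lpnorm_triangle[OF p])
  also have "\<dots> = (1 - t) * lpnorm p a + t * lpnorm p b" using t p by (simp add: lpnorm_hom)
  finally have n: "lpnorm p ((1 - t) *\<^sub>R a + t *\<^sub>R b) \<le> (1 - t) * lpnorm p a + t * lpnorm p b" .
  have "c * lpnorm p ((1 - t) *\<^sub>R a + t *\<^sub>R b) \<le> c * ((1 - t) * lpnorm p a + t * lpnorm p b)"
    using mult_left_mono[OF n c] .
  also have "\<dots> = (1 - t) * A + t * B" by (simp add: A_def B_def algebra_simps)
  finally have "c * lpnorm p ((1 - t) *\<^sub>R a + t *\<^sub>R b) \<le> (1 - t) * A + t * B" .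
  moreover have "0 \<le> c * lpnorm p ((1 - t) *\<^sub>R a + t *\<^sub>R b)" by (intro mult_nonneg_nonneg c lpnorm_nonneg)
  ultimately have "(c * lpnorm p ((1 - t) *\<^sub>R a + t *\<^sub>R b))\<^sup>2 \<le> ((1 - t) * A + t * B)\<^sup>2"
    by (intro power_mono) auto
  also have "\<dots> \<le> (1 - t) * A\<^sup>2 + t * B\<^sup>2"
  proof -
    have "(1 - t) * A\<^sup>2 + t * B\<^sup>2 - ((1 - t) * A + t * B)\<^sup>2 = t * (1 - t) * (A - B)\<^sup>2"
      by (simp add: power2_eq_square algebra_simps)
    moreover have "t * (1 - t) * (A - B)\<^sup>2 \<ge> 0" using t by simp
    ultimately show ?thesis by linarith
  qed
  finally show "(1/2) * (c * lpnorm p ((1 - t) *\<^sub>R a + t *\<^sub>R b))\<^sup>2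
      \<le> (1 - t) * ((1/2) * (c * lpnorm p a)\<^sup>2) + t * ((1/2) * (c * lpnorm p b)\<^sup>2)"
    by (simp add: A_def B_def)
qed simp

lemma F_hom:
  assumes a: "a > 0" and p: "p \<ge> 1"
  shows "(1/2) * (c * lpnorm p (a *\<^sub>R t))\<^sup>2 = a\<^sup>2 * ((1/2) * (c * lpnorm p t)\<^sup>2)"
  using a p by (simp add: lpnorm_hom power_mult_distrib)

theorem lemmaH2:
  fixes f :: "real ^ 'n \<Rightarrow> 'x \<Rightarrow> real" and L :: real and K :: nat
    and x :: "nat \<Rightarrow> 'x" and y :: "nat \<Rightarrow> real"
    and \<phi> :: "real ^ 'n \<Rightarrow> real" and \<theta>s :: "real ^ 'n"
  assumes L_pos: "L > 0"
    and lip: "\<And>z. locally_lipschitz (\<lambda>\<theta>. f \<theta> z)"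
    and hom: "\<And>c \<theta> z. c > 0 \<Longrightarrow> f (c *\<^sub>R \<theta>) z = c powr L * f \<theta> z"
    and phi: "\<phi> = l1norm \<or> (\<exists>p\<ge>2. \<phi> = (\<lambda>\<theta>. (p - 1) powr (1 / p) * lpnorm p \<theta>))"
    and kkt: "kkt_point \<phi> f K x y \<theta>s"
  shows "\<exists>h. (\<forall>i<K. h i \<in> clarke_subdiff (\<lambda>\<theta>. f \<theta> (x i)) \<theta>s) \<and>
             (\<forall>i<K. y i * (((1 / L) *\<^sub>R \<theta>s) \<bullet> h i) \<ge> 1) \<and>
             (\<forall>\<theta>. (\<forall>i<K. y i * (\<theta> \<bullet> h i) \<ge> 1) \<longrightarrow>
                  (1/2) * (\<phi> ((1 / L) *\<^sub>R \<theta>s))\<^sup>2 \<le> (1/2) * (\<phi> \<theta>)\<^sup>2)"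
proof -
  obtain c p where c: "c \<ge> 0" and p: "p \<ge> 1" and phic: "\<phi> = (\<lambda>\<theta>. c * lpnorm p \<theta>)"
    using phi_form[OF phi] by blast
  define F where "F = (\<lambda>t. (1/2) * (\<phi> t)\<^sup>2)"
  have Fc: "convex_on UNIV F" unfolding F_def phic by (rule F_conv[OF c p])
  have Fh: "F (a *\<^sub>R t) = a\<^sup>2 * F t" if "a > 0" for a t
    unfolding F_def phic by (rule F_hom[OF that p])
  from kkt obtain lam h' where feas: "\<forall>i<K. y i * f \<theta>s (x i) \<ge> 1"
    and lam: "\<forall>i<K. lam i \<ge> 0"
    and h': "\<forall>i<K. h' i \<in> clarke_subdiff (\<lambda>t. y i * f t (x i)) \<theta>s"
    and g0: "0 \<in> (\<lambda>g. g - (\<Sum>i<K. lam i *\<^sub>R h' i)) ` clarke_subdiff F \<theta>s"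
    and cs: "\<forall>i<K. lam i * (y i * f \<theta>s (x i) - 1) = 0"
    unfolding kkt_point_def F_def by blast
  from g0 obtain g where g: "g \<in> clarke_subdiff F \<theta>s" and geq: "g = (\<Sum>i<K. lam i *\<^sub>R h' i)"
    by auto
  have yne: "y i \<noteq> 0" if "i < K" for i using feas that by force
  define h where "h i = (1 / y i) *\<^sub>R h' i" for i
  have hcs: "h i \<in> clarke_subdiff (\<lambda>\<theta>. f \<theta> (x i)) \<theta>s" if "i < K" for i
    unfolding h_def using clarke_scale[OF yne[OF that], where g="\<lambda>t. f t (x i)"] h' that by auto
  have h'h: "h' i = y i *\<^sub>R h i" if "i < K" for i using yne[OF that] by (simp add: h_def)
  have eul: "h i \<bullet> \<theta>s = L * f \<theta>s (x i)" if "i < K" for i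
    by (rule euler[OF L_pos lip_cont[OF lip] hom hcs[OF that]])
  have feas2: "y i * (((1 / L) *\<^sub>R \<theta>s) \<bullet> h i) \<ge> 1" if "i < K" for i
    using eul[OF that] feas that L_pos by (simp add: inner_commute)
  have opt: "F ((1 / L) *\<^sub>R \<theta>s) \<le> F \<theta>" if th: "\<forall>i<K. y i * (\<theta> \<bullet> h i) \<ge> 1" for \<theta>
  proof -
    have sg: "F \<theta>s + g \<bullet> (L *\<^sub>R \<theta> - \<theta>s) \<le> F (L *\<^sub>R \<theta>)" by (rule clarke_convex[OF Fc g])
    have "g \<bullet> (L *\<^sub>R \<theta> - \<theta>s) = (\<Sum>i<K. lam i * (y i * (h i \<bullet> (L *\<^sub>R \<theta> - \<theta>s))))"
      unfolding geq by (simp add: inner_sum_left h'h mult.assoc)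
    also have "\<dots> \<ge> 0"
    proof (intro sum_nonneg)
      fix i assume "i \<in> {..<K}"
      then have i: "i < K" by simp
      have e1: "y i * (h i \<bullet> (L *\<^sub>R \<theta> - \<theta>s)) = L * (y i * (\<theta> \<bullet> h i)) - L * (y i * f \<theta>s (x i))"
        using eul[OF i] by (simp add: inner_diff_right inner_commute algebra_simps)
      have e1': "lam i * (y i * (h i \<bullet> (L *\<^sub>R \<theta> - \<theta>s))) = lam i * (L * (y i * (\<theta> \<bullet> h i))) - lam i * (L * (y i * f \<theta>s (x i)))"
        unfolding e1 by (rule right_diff_distrib)
      have e2: "lam i * (L * (y i * (\<theta> \<bullet> h i))) \<ge> lam i * L"
        using th i lam L_pos by (simp add: mult_left_mono)
      have e0: "lam i * (y i * f \<theta>s (x i) - 1) = 0" using cs i by blast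
      have e3: "lam i * (y i * f \<theta>s (x i)) = lam i"
        using e0 unfolding right_diff_distrib mult_1_right by linarith
      have e4: "lam i * (L * (y i * f \<theta>s (x i))) = lam i * L"
        using e3 by (metis mult.commute mult.left_commute)
      show "0 \<le> lam i * (y i * (h i \<bullet> (L *\<^sub>R \<theta> - \<theta>s)))"
        using e1' e2 e4 by linarith
    qed
    finally have "F \<theta>s \<le> F (L *\<^sub>R \<theta>)" using sg by linarith
    moreover have "F \<theta>s = L\<^sup>2 * F ((1 / L) *\<^sub>R \<theta>s)"
      using Fh[OF L_pos, of "(1 / L) *\<^sub>R \<theta>s"] L_pos by simp
    moreover have "F (L *\<^sub>R \<theta>) = L\<^sup>2 * F \<theta>" by (rule Fh[OF L_pos])
    ultimately have "L\<^sup>2 * F ((1 / L) *\<^sub>R \<theta>s) \<le> L\<^sup>2 * F \<theta>" by simp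
    then show ?thesis using L_pos by simp
  qed
  show ?thesis
    using opt unfolding F_def by (intro exI[of _ h] conjI allI impI hcs feas2) auto
qed

end
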